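(* Let $k$ be a field, $V$ a $k$-vector space, $\varphi\in\operatorname{End}_k(V)$ a finite potent endomorphism with index $i(\varphi)=r$ and AST-decomposition $V=W_\varphi\oplus U_\varphi$. Then an endomorphism $\psi\in\operatorname{End}_k(V)$ is a G-Drazin inverse of $\varphi$ if and only if $W_\varphi$ and $U_\varphi$ are invariant under $\psi$, $\psi|_{W_\varphi}=(\varphi|_{W_\varphi})^{-1}$, and $\psi|_{U_\varphi}$ is a generalized inverse of $\varphi|_{U_\varphi}$.
   Context: An endomorphism $\varphi$ of a $k$-vector space $V$ is finite potent if $\varphi^n(V)$ is finite dimensional for some $n$. For such $\varphi$, the AST-decomposition is $V=U_\varphi\oplus W_\varphi$ where $U_\varphi=\{v\in V: \varphi^m(v)=0 \text{ for some } m\}$ and $W_\varphi=\{v\in V: p(\varphi)(v)=0 \text{ for some } p(x)\in k[x] \text{ coprime to } x\}$; both are $\varphi$-invariant, $\varphi|_{U_\varphi}$ is nilpotent, $W_\varphi$ is finite dimensional and $\varphi|_{W_\varphi}$ is an automorphism. The index $i(\varphi)$ is the nilpotency order of $\varphi|_{U_\varphi}$. An endomorphism $\psi\in\operatorname{End}_k(V)$ is a G-Drazin inverse of $\varphi$ if $\varphi\circ\psi\circ\varphi=\varphi$ and $\psi\circ\varphi^{r}=\varphi^{r}\circ\psi$, where $r=i(\varphi)$. A generalized inverse of an endomorphism $g$ of a vector space $U$ is an endomorphism $g^-$ of $U$ with $g\circ g^-\circ g=g$. *)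

theory Defs
  imports Main "HOL-Computational_Algebra.Polynomial"
begin

text \<open>A k-vector space V is modelled by a type 'v with a scalar multiplication
  scale :: 'k \<Rightarrow> 'v \<Rightarrow> 'v satisfying the vector_space locale axioms;
  endomorphisms are the k-linear maps 'v \<Rightarrow> 'v.\<close>

definition finite_potent :: "('k::field \<Rightarrow> 'v::ab_group_add \<Rightarrow> 'v) \<Rightarrow> ('v \<Rightarrow> 'v) \<Rightarrow> bool" where
  "finite_potent scale \<phi> \<longleftrightarrow> Vector_Spaces.linear scale scale \<phi> \<and>
     (\<exists>n B. finite B \<and> module.span scale B = range (\<phi> ^^ n))"

definition poly_endo :: "('k::field \<Rightarrow> 'v::ab_group_add \<Rightarrow> 'v) \<Rightarrow> 'k poly \<Rightarrow> ('v \<Rightarrow> 'v) \<Rightarrow> 'v \<Rightarrow> 'v" where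
  "poly_endo scale p \<phi> v = (\<Sum>i\<le>degree p. scale (coeff p i) ((\<phi> ^^ i) v))"

definition U_part :: "('v::ab_group_add \<Rightarrow> 'v) \<Rightarrow> 'v set" where
  "U_part \<phi> = {v. \<exists>m. (\<phi> ^^ m) v = 0}"

definition W_part :: "('k::field \<Rightarrow> 'v::ab_group_add \<Rightarrow> 'v) \<Rightarrow> ('v \<Rightarrow> 'v) \<Rightarrow> 'v set" where
  "W_part scale \<phi> = {v. \<exists>p :: 'k poly. coprime p [:0, 1:] \<and> poly_endo scale p \<phi> v = 0}"

definition fp_index :: "('v::ab_group_add \<Rightarrow> 'v) \<Rightarrow> nat" where
  "fp_index \<phi> = (LEAST n. \<forall>v\<in>U_part \<phi>. (\<phi> ^^ n) v = 0)"

definition G_Drazin_inverse :: "('v::ab_group_add \<Rightarrow> 'v) \<Rightarrow> ('v \<Rightarrow> 'v) \<Rightarrow> bool" where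
  "G_Drazin_inverse \<phi> \<psi> \<longleftrightarrow> \<phi> \<circ> \<psi> \<circ> \<phi> = \<phi> \<and>
     \<psi> \<circ> (\<phi> ^^ fp_index \<phi>) = (\<phi> ^^ fp_index \<phi>) \<circ> \<psi>"

end

theory Submission
  imports Defs "HOL-Computational_Algebra.Polynomial_Factorial"
begin

lemma cop1:
  fixes p :: "'k::field poly"
  assumes c: "coprime p [:0,1:]" shows "coeff p 0 \<noteq> 0"
proof
  assume "coeff p 0 = 0"
  then have "[:0,1:] dvd p" using dvd_iff_poly_eq_0[of 0 p] by (simp add: poly_0_coeff_0)
  then have "is_unit [:0,(1::'k):]" using coprime_common_divisor[OF c] by auto
  then show False by (simp add: is_unit_iff_degree)
qed

lemma cop2:
  fixes p :: "'k::field poly"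
  assumes "coeff p 0 \<noteq> 0" shows "coprime p [:0,1:]"
proof (rule coprimeI)
  fix d assume d1: "d dvd p" and d2: "d dvd [:0,1:]"
  have ir: "irreducible [:0,(1::'k):]" by (rule irreducible_linear_field_poly) simp
  have nd: "\<not> [:0,1:] dvd p" using dvd_iff_poly_eq_0[of 0 p] assms by (simp add: poly_0_coeff_0)
  from d2 obtain e where e: "[:0,1:] = d * e" by (auto elim: dvdE)
  show "is_unit d"
  proof (rule ccontr)
    assume "\<not> is_unit d"
    then have "is_unit e" using irreducibleD[OF ir e] by blast
    then have "[:0,1:] dvd d" using e mult_unit_dvd_iff[of e d d] by simp
    then show False using d1 nd dvd_trans by blast
  qed
qed

locale fpot = vector_space scale for scale :: "'k::field \<Rightarrow> 'v::ab_group_add \<Rightarrow> 'v" +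
  fixes \<phi> :: "'v \<Rightarrow> 'v" and B0 :: "'v set" and n0 :: nat
  assumes lin: "Vector_Spaces.linear scale scale \<phi>" and finB0: "finite B0"
    and spanB0: "span B0 = range (\<phi> ^^ n0)"
begin

lemma powlin: "Vector_Spaces.linear scale scale (\<phi> ^^ k)"
proof (induction k)
  case 0 then show ?case by (simp add: local.linear_ident)
next
  case (Suc k)
  then show ?case using lin Vector_Spaces.linear_compose[OF Suc lin] by (simp add: o_def)
qed

lemma padd: "(\<phi> ^^ k) (x + y) = (\<phi> ^^ k) x + (\<phi> ^^ k) y"
proof - interpret P: Vector_Spaces.linear scale scale "\<phi> ^^ k" by (rule powlin) show ?thesis by (rule P.add) qed
lemma pscale: "(\<phi> ^^ k) (scale c x) = scale c ((\<phi> ^^ k) x)"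
proof - interpret P: Vector_Spaces.linear scale scale "\<phi> ^^ k" by (rule powlin) show ?thesis by (rule P.scale) qed
lemma pzero: "(\<phi> ^^ k) 0 = 0"
proof - interpret P: Vector_Spaces.linear scale scale "\<phi> ^^ k" by (rule powlin) show ?thesis by (rule P.zero) qed
lemma pdiff: "(\<phi> ^^ k) (x - y) = (\<phi> ^^ k) x - (\<phi> ^^ k) y"
proof - interpret P: Vector_Spaces.linear scale scale "\<phi> ^^ k" by (rule powlin) show ?thesis by (rule P.diff) qed
lemma psum: "(\<phi> ^^ k) (sum f A) = (\<Sum>a\<in>A. (\<phi> ^^ k) (f a))"
proof - interpret P: Vector_Spaces.linear scale scale "\<phi> ^^ k" by (rule powlin) show ?thesis by (rule P.sum) qed
lemma psub: "subspace (range (\<phi> ^^ k))"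
proof - interpret P: Vector_Spaces.linear scale scale "\<phi> ^^ k" by (rule powlin)
  show ?thesis by (rule P.subspace_image[OF subspace_UNIV]) qed
lemma pinj: "subspace S \<Longrightarrow> inj_on (\<phi> ^^ k) S \<longleftrightarrow> (\<forall>x\<in>S. (\<phi> ^^ k) x = 0 \<longrightarrow> x = 0)"
proof - interpret P: Vector_Spaces.linear scale scale "\<phi> ^^ k" by (rule powlin)
  show "subspace S \<Longrightarrow> ?thesis" by (rule P.inj_on_iff_eq_0) qed
lemma pspan: "span ((\<phi> ^^ k) ` S) = (\<phi> ^^ k) ` span S"
proof - interpret P: Vector_Spaces.linear scale scale "\<phi> ^^ k" by (rule powlin)
  show ?thesis by (rule P.span_image) qed
lemma pinjspan: "independent ((\<phi> ^^ k) ` B) \<Longrightarrow> inj_on (\<phi> ^^ k) B \<Longrightarrow> inj_on (\<phi> ^^ k) (span B)"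
proof - interpret P: Vector_Spaces.linear scale scale "\<phi> ^^ k" by (rule powlin)
  show "independent ((\<phi> ^^ k) ` B) \<Longrightarrow> inj_on (\<phi> ^^ k) B \<Longrightarrow> ?thesis" by (rule P.inj_on_span_independent_image) qed

lemma pcomp: "(\<phi> ^^ a) ((\<phi> ^^ b) x) = (\<phi> ^^ (a + b)) x"
  by (simp add: funpow_add)

lemma phadd: "\<phi> (x + y) = \<phi> x + \<phi> y" using padd[of 1] by simp
lemma phscale: "\<phi> (scale c x) = scale c (\<phi> x)" using pscale[of 1] by simp
lemma phzero: "\<phi> 0 = 0" using pzero[of 1] by simp
lemma phsum: "\<phi> (sum f A) = (\<Sum>a\<in>A. \<phi> (f a))" using psum[of 1] by simp

lemma rmono: "k \<le> l \<Longrightarrow> range (\<phi> ^^ l) \<subseteq> range (\<phi> ^^ k)"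
proof
  fix y assume kl: "k \<le> l" and "y \<in> range (\<phi> ^^ l)"
  then obtain x where "y = (\<phi> ^^ l) x" by auto
  then have "y = (\<phi> ^^ k) ((\<phi> ^^ (l - k)) x)" using kl by (simp add: pcomp)
  then show "y \<in> range (\<phi> ^^ k)" by auto
qed

lemma rsuc: "\<phi> ` range (\<phi> ^^ k) = range (\<phi> ^^ Suc k)"
  by (simp add: image_comp)

lemma rbound: "n0 \<le> k \<Longrightarrow> range (\<phi> ^^ k) \<subseteq> span B0"
  using rmono[of n0 k] spanB0 by simp

lemma bas:
  assumes "subspace S" "S \<subseteq> span B0"
  obtains C where "finite C" "C \<subseteq> S" "independent C" "span C = S" "card C = dim S"
proof -
  obtain C where C: "C \<subseteq> S" "independent C" "S \<subseteq> span C" "card C = dim S"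
    using basis_exists by blast
  have "finite C" using independent_span_bound[OF finB0 C(2)] C(1) assms(2) by auto
  have "span C = S" using span_minimal[OF C(1) assms(1)] C(3) by auto
  then show ?thesis using that C \<open>finite C\<close> by blast
qed

lemma dimle:
  assumes "subspace S" "subspace T" "S \<subseteq> T" "T \<subseteq> span B0"
  shows "dim S \<le> dim T"
proof -
  obtain C where C: "finite C" "C \<subseteq> S" "independent C" "span C = S" "card C = dim S"
    using bas[of S] assms by blast
  obtain D where D: "finite D" "D \<subseteq> T" "independent D" "span D = T" "card D = dim T"
    using bas[of T] assms by blast
  have "card C \<le> card D" using independent_span_bound[OF D(1) C(3)] C(2) assms(3) D(4) by auto
  then show ?thesis using C D by simp
qed

lemma dimeq:
  assumes "subspace S" "subspace T" "S \<subseteq> T" "T \<subseteq> span B0" "dim T \<le> dim S"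
  shows "S = T"
proof (rule ccontr)
  assume "S \<noteq> T"
  then obtain a where a: "a \<in> T" "a \<notin> S" using assms(3) by blast
  obtain C where C: "finite C" "C \<subseteq> S" "independent C" "span C = S" "card C = dim S"
    using bas[of S] assms by blast
  obtain D where D: "finite D" "D \<subseteq> T" "independent D" "span D = T" "card D = dim T"
    using bas[of T] assms by blast
  have aC: "a \<notin> C" "a \<notin> span C" using a C by auto
  have "independent (insert a C)" using aC C(3) by (simp add: independent_insert)
  moreover have "insert a C \<subseteq> span D" using a C D assms(3) by auto
  ultimately have "card (insert a C) \<le> card D" using independent_span_bound[OF D(1)] by blast
  then show False using aC C D assms(5) by simp
qed

lemma stab: "\<exists>k. range (\<phi> ^^ (n0 + Suc k)) = range (\<phi> ^^ (n0 + k))"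
proof (rule ccontr)
  assume "\<not> ?thesis"
  hence ne: "\<And>k. range (\<phi> ^^ (n0 + Suc k)) \<noteq> range (\<phi> ^^ (n0 + k))" by blast
  have lt: "dim (range (\<phi> ^^ (n0 + Suc k))) < dim (range (\<phi> ^^ (n0 + k)))" for k
  proof -
    have s: "range (\<phi> ^^ (n0 + Suc k)) \<subseteq> range (\<phi> ^^ (n0 + k))" by (rule rmono) simp
    have b: "range (\<phi> ^^ (n0 + k)) \<subseteq> span B0" by (rule rbound) simp
    show ?thesis using dimle[OF psub psub s b] dimeq[OF psub psub s b] ne[of k] by fastforce
  qed
  have "dim (range (\<phi> ^^ (n0 + k))) + k \<le> dim (range (\<phi> ^^ n0))" for k
  proof (induction k)
    case 0 then show ?case by simp
  next
    case (Suc k) then show ?case using lt[of k] by simp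
  qed
  from this[of "Suc (dim (range (\<phi> ^^ n0)))"] show False by simp
qed

definition M where "M = n0 + (SOME k. range (\<phi> ^^ (n0 + Suc k)) = range (\<phi> ^^ (n0 + k)))"
definition Wp where "Wp = range (\<phi> ^^ M)"
definition Up where "Up = {v. (\<phi> ^^ M) v = 0}"

lemma Mstab: "range (\<phi> ^^ Suc M) = range (\<phi> ^^ M)"
  using someI_ex[OF stab] unfolding M_def by simp

lemma Wsub: "subspace Wp" unfolding Wp_def by (rule psub)
lemma Wspan: "Wp \<subseteq> span B0" unfolding Wp_def by (rule rbound) (simp add: M_def)
lemma phiW: "\<phi> ` Wp = Wp" unfolding Wp_def using rsuc[of M] Mstab by simp
lemma phiW_in: "x \<in> Wp \<Longrightarrow> \<phi> x \<in> Wp" using phiW by blast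
lemma powW: "(\<phi> ^^ j) ` Wp = Wp"
proof (induction j)
  case 0 then show ?case by simp
next
  case (Suc j)
  have "(\<phi> ^^ Suc j) ` Wp = \<phi> ` ((\<phi> ^^ j) ` Wp)" by (simp add: image_comp)
  then show ?case using Suc phiW by simp
qed
lemma powW_in: "x \<in> Wp \<Longrightarrow> (\<phi> ^^ j) x \<in> Wp" using powW[of j] by blast

lemma injW: "inj_on \<phi> Wp"
proof -
  obtain C where C: "finite C" "C \<subseteq> Wp" "independent C" "span C = Wp" "card C = dim Wp"
    using bas[OF Wsub Wspan] by blast
  have "span (\<phi> ` C) = \<phi> ` span C" using pspan[of 1 C] by simp
  then have sp: "span (\<phi> ` C) = Wp" using C(4) phiW by simp
  have fin: "finite (\<phi> ` C)" using C(1) by simp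
  have ge: "dim Wp \<le> card (\<phi> ` C)" using dim_le_card[of Wp "\<phi> ` C"] sp fin by simp
  have le: "card (\<phi> ` C) \<le> card C" using card_image_le[OF C(1)] .
  have injC: "inj_on \<phi> C" using eq_card_imp_inj_on[OF C(1), of \<phi>] ge le C(5) by simp
  have ind: "independent (\<phi> ` C)"
  proof (rule ccontr)
    assume "\<not> independent (\<phi> ` C)"
    then obtain a where a: "a \<in> \<phi> ` C" "a \<in> span (\<phi> ` C - {a})" by (auto simp: dependent_def)
    have "\<phi> ` C \<subseteq> span (\<phi> ` C - {a})"
    proof
      fix b assume "b \<in> \<phi> ` C"
      then show "b \<in> span (\<phi> ` C - {a})" using a(2) by (cases "b = a") (auto intro: span_base)
    qed
    then have "span (\<phi> ` C) \<subseteq> span (\<phi> ` C - {a})" using span_minimal[OF _ subspace_span] by blast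
    then have "dim Wp \<le> card (\<phi> ` C - {a})" using dim_le_card[of Wp "\<phi> ` C - {a}"] sp fin by simp
    moreover have "card (\<phi> ` C - {a}) = card (\<phi> ` C) - 1" using a(1) fin by simp
    moreover have "card (\<phi> ` C) > 0" using a(1) fin card_gt_0_iff by blast
    ultimately show False using le C(5) by simp
  qed
  have "inj_on \<phi> (span C)" using pinjspan[of 1 C] injC ind by simp
  then show ?thesis using C(4) by simp
qed

lemma injWpow: "inj_on (\<phi> ^^ j) Wp"
proof (induction j)
  case 0 then show ?case by simp
next
  case (Suc j)
  have "inj_on (\<phi> \<circ> (\<phi> ^^ j)) Wp" using comp_inj_on[OF Suc] injW powW[of j] by simp
  then show ?case by (simp add: o_def)
qed

lemma Wzero: "x \<in> Wp \<Longrightarrow> (\<phi> ^^ j) x = 0 \<Longrightarrow> x = 0"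
  using inj_onD[OF injWpow[of j], of x 0] pzero[of j] subspace_0[OF Wsub] by simp

lemma decomp: "\<exists>u y. v = u + y \<and> u \<in> Up \<and> y \<in> Wp"
proof -
  have "(\<phi> ^^ M) v \<in> Wp" by (simp add: Wp_def)
  then obtain y where y: "y \<in> Wp" "(\<phi> ^^ M) v = (\<phi> ^^ M) y" using powW[of M] by (metis imageE)
  have "(\<phi> ^^ M) (v - y) = 0" using y by (simp add: pdiff)
  then show ?thesis using y(1) unfolding Up_def by (intro exI[of _ "v - y"] exI[of _ y]) simp
qed

lemma Ueq: "U_part \<phi> = Up"
proof
  show "U_part \<phi> \<subseteq> Up"
  proof
    fix v assume "v \<in> U_part \<phi>"
    then obtain m where m: "(\<phi> ^^ m) v = 0" by (auto simp: U_part_def)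
    obtain u y where uy: "v = u + y" "u \<in> Up" "y \<in> Wp" using decomp by blast
    have "(\<phi> ^^ (M + m)) v = 0" using m pcomp[of M m v] pzero by simp
    moreover have "(\<phi> ^^ (m + M)) u = 0" using uy(2) pcomp[of m M u] pzero by (simp add: Up_def)
    ultimately have "(\<phi> ^^ (m + M)) y = 0" using uy(1) padd by (simp add: add.commute)
    then have "y = 0" using Wzero uy(3) by blast
    then show "v \<in> Up" using uy by simp
  qed
  show "Up \<subseteq> U_part \<phi>" by (auto simp: Up_def U_part_def)
qed


lemma pe_comm: "poly_endo scale p \<phi> (\<phi> v) = \<phi> (poly_endo scale p \<phi> v)"
  unfolding poly_endo_def by (simp add: phsum phscale funpow_swap1)

lemma pe_commp: "poly_endo scale p \<phi> ((\<phi> ^^ j) v) = (\<phi> ^^ j) (poly_endo scale p \<phi> v)"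
proof (induction j)
  case 0 then show ?case by simp
next
  case (Suc j) then show ?case by (simp add: pe_comm)
qed

lemma pe_add: "poly_endo scale p \<phi> (x + y) = poly_endo scale p \<phi> x + poly_endo scale p \<phi> y"
  unfolding poly_endo_def by (simp add: padd scale_right_distrib sum.distrib)

lemma pe_zero: "poly_endo scale p \<phi> 0 = 0"
  unfolding poly_endo_def by (simp add: pzero)

lemma pe_ker: assumes "\<phi> z = 0" shows "poly_endo scale p \<phi> z = scale (coeff p 0) z"
proof -
  have "(\<phi> ^^ Suc i) z = 0" for i using assms pzero[of i] by (simp add: funpow_swap1)
  then show ?thesis unfolding poly_endo_def by (subst sum.atMost_shift) simp_all
qed

lemma Uzero:
  assumes u: "u \<in> Up" and c: "coeff p 0 \<noteq> 0" and pu: "poly_endo scale p \<phi> u = 0"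
  shows "u = 0"
proof -
  have "(\<phi> ^^ (M - j)) u = 0" for j
  proof (induction j)
    case 0 then show ?case using u by (simp add: Up_def)
  next
    case (Suc j)
    show ?case
    proof (cases "M - j = 0")
      case True then have "M - Suc j = 0" by simp
      with Suc True show ?thesis by simp
    next
      case False
      then have e: "M - j = Suc (M - Suc j)" by simp
      let ?z = "(\<phi> ^^ (M - Suc j)) u"
      have "\<phi> ?z = 0" using Suc.IH unfolding e by simp
      then have "poly_endo scale p \<phi> ?z = scale (coeff p 0) ?z" by (rule pe_ker)
      moreover have "poly_endo scale p \<phi> ?z = 0" using pe_commp pu pzero by simp
      ultimately have "scale (coeff p 0) ?z = 0" by simp
      then show ?thesis using c by simp
    qed
  qed
  from this[of M] show ?thesis by simp
qed

lemma W_sub: "W_part scale \<phi> \<subseteq> Wp"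
proof
  fix w assume "w \<in> W_part scale \<phi>"
  then obtain p :: "'k poly" where p: "coprime p [:0,1:]" "poly_endo scale p \<phi> w = 0"
    unfolding W_part_def by blast
  obtain u y where uy: "w = u + y" "u \<in> Up" "y \<in> Wp" using decomp by blast
  have pu: "(\<phi> ^^ M) (poly_endo scale p \<phi> u) = 0"
    using uy(2) pe_commp[of p M u] pe_zero by (simp add: Up_def)
  obtain x where x: "y = (\<phi> ^^ M) x" using uy(3) by (auto simp: Wp_def)
  have py: "poly_endo scale p \<phi> y \<in> Wp" using x pe_commp[of p M x] by (simp add: Wp_def)
  have "poly_endo scale p \<phi> u = - poly_endo scale p \<phi> y"
    using p(2) uy(1) pe_add by (simp add: eq_neg_iff_add_eq_0)
  then have "poly_endo scale p \<phi> u \<in> Wp" using py subspace_neg[OF Wsub] by simp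
  then have "poly_endo scale p \<phi> u = 0" using Wzero pu by blast
  then have "u = 0" using Uzero[OF uy(2) cop1[OF p(1)]] by simp
  then show "w \<in> Wp" using uy by simp
qed

lemma pe_ext: "degree p \<le> D \<Longrightarrow> poly_endo scale p \<phi> v = (\<Sum>i\<le>D. scale (coeff p i) ((\<phi> ^^ i) v))"
  unfolding poly_endo_def by (rule sum.mono_neutral_left) (auto simp: coeff_eq_0)

lemma D0:
  assumes "c 0 \<noteq> 0" "(\<Sum>i\<le>D. scale (c i) ((\<phi> ^^ i) w)) = 0"
  shows "w \<in> W_part scale \<phi>"
proof -
  define p where "p = Poly (map c [0..<Suc D])"
  have cp: "coeff p i = (if i \<le> D then c i else 0)" for i
    by (auto simp: p_def nth_default_def simp del: upt_Suc)
  have dp: "degree p \<le> D" by (rule degree_le) (simp add: cp)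
  have "poly_endo scale p \<phi> w = 0" using pe_ext[OF dp] assms(2) cp by simp
  moreover have "coprime p [:0,1:]" using cop2[of p] cp assms(1) by simp
  ultimately show ?thesis unfolding W_part_def by blast
qed

lemma Gdep:
  "w \<in> Wp \<Longrightarrow> (\<Sum>i\<le>D. scale (c i) ((\<phi> ^^ i) w)) = 0 \<Longrightarrow> \<exists>i\<le>D. c i \<noteq> 0 \<Longrightarrow> w \<in> W_part scale \<phi>"
proof (induction D arbitrary: c)
  case 0
  then have "c 0 \<noteq> 0" by auto
  then show ?case using D0[where c=c and D=0 and w=w] 0 by simp
next
  case (Suc D)
  show ?case
  proof (cases "c 0 = 0")
    case False then show ?thesis using D0 Suc.prems by blast
  next
    case True
    let ?s = "\<Sum>i\<le>D. scale (c (Suc i)) ((\<phi> ^^ i) w)"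
    have "(\<Sum>i\<le>Suc D. scale (c i) ((\<phi> ^^ i) w)) = scale (c 0) w + (\<Sum>i\<le>D. scale (c (Suc i)) ((\<phi> ^^ Suc i) w))"
      by (subst sum.atMost_Suc_shift) simp
    also have "\<dots> = \<phi> ?s" using True by (simp add: phsum phscale)
    finally have "\<phi> ?s = 0" using Suc.prems(2) by simp
    moreover have "?s \<in> Wp"
      using Suc.prems(1) by (intro subspace_sum[OF Wsub] subspace_scale[OF Wsub] powW_in)
    ultimately have s0: "?s = 0" using Wzero[of _ 1] by simp
    obtain i where i: "i \<le> Suc D" "c i \<noteq> 0" using Suc.prems(3) by blast
    then obtain j where "i = Suc j" using True by (cases i) auto
    then have "\<exists>i\<le>D. c (Suc i) \<noteq> 0" using i by auto
    then show ?thesis using Suc.IH[of "\<lambda>i. c (Suc i)"] Suc.prems(1) s0 by blast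
  qed
qed

lemma Wp_sub: "Wp \<subseteq> W_part scale \<phi>"
proof
  fix w assume w: "w \<in> Wp"
  show "w \<in> W_part scale \<phi>"
  proof (cases "inj_on (\<lambda>i. (\<phi> ^^ i) w) {..card B0}")
    case True
    let ?S = "(\<lambda>i. (\<phi> ^^ i) w) ` {..card B0}"
    have cS: "card ?S = Suc (card B0)" using card_image[OF True] by simp
    have "?S \<subseteq> span B0" using powW_in w Wspan by auto
    have "dependent ?S"
    proof (rule ccontr)
      assume "\<not> dependent ?S"
      then have "card ?S \<le> card B0" using independent_span_bound[OF finB0] \<open>?S \<subseteq> span B0\<close> by blast
      then show False using cS by simp
    qed
    then obtain u where u: "\<exists>v\<in>?S. u v \<noteq> 0" "(\<Sum>v\<in>?S. scale (u v) v) = 0"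
      using dependent_finite[of ?S] by auto
    have "(\<Sum>i\<le>card B0. scale (u ((\<phi> ^^ i) w)) ((\<phi> ^^ i) w)) = 0"
      using u(2) sum.reindex[OF True, of "\<lambda>v. scale (u v) v"] by (simp add: o_def)
    moreover have "\<exists>i\<le>card B0. u ((\<phi> ^^ i) w) \<noteq> 0" using u(1) by auto
    ultimately show ?thesis using Gdep[OF w, where D="card B0" and c="\<lambda>i. u ((\<phi> ^^ i) w)"] by blast
  next
    case False
    then obtain i j where ij: "i \<noteq> j" "(\<phi> ^^ i) w = (\<phi> ^^ j) w" by (auto simp: inj_on_def)
    then obtain a b where ab: "a < b" "(\<phi> ^^ a) w = (\<phi> ^^ b) w"
      by (metis linorder_neqE_nat)
    have "(\<phi> ^^ a) ((\<phi> ^^ (b - a)) w) = (\<phi> ^^ a) w" using ab by (simp add: pcomp)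
    then have e: "(\<phi> ^^ (b - a)) w = w" using inj_onD[OF injWpow[of a]] powW_in w by blast
    define d where "d = b - a"
    have d0: "d \<noteq> 0" using ab by (simp add: d_def)
    define c where "c = (\<lambda>l. (if l = d then 1 else 0) - (if l = 0 then 1 else (0::'k)))"
    have t: "scale (c l) ((\<phi> ^^ l) w) = (if l = d then (\<phi> ^^ l) w else 0) - (if l = 0 then (\<phi> ^^ l) w else 0)" for l
      by (simp add: c_def scale_left_diff_distrib)
    have "(\<Sum>l\<le>d. scale (c l) ((\<phi> ^^ l) w)) = (\<phi> ^^ d) w - w"
      unfolding t by (simp add: sum_subtractf)
    also have "\<dots> = 0" using e by (simp add: d_def)
    finally show ?thesis using D0[where c=c and D=d and w=w] d0 by (simp add: c_def)
  qed
qed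

lemma Weq: "W_part scale \<phi> = Wp" using W_sub Wp_sub by blast

theorem main:
  assumes lpsi: "Vector_Spaces.linear scale scale \<psi>"
  shows "G_Drazin_inverse \<phi> \<psi> \<longleftrightarrow>
    (\<psi> ` W_part scale \<phi> \<subseteq> W_part scale \<phi> \<and> \<psi> ` U_part \<phi> \<subseteq> U_part \<phi> \<and>
     (\<forall>w\<in>W_part scale \<phi>. \<psi> (\<phi> w) = w \<and> \<phi> (\<psi> w) = w) \<and>
     (\<forall>u\<in>U_part \<phi>. \<phi> (\<psi> (\<phi> u)) = \<phi> u))"
proof -
  interpret Psi: Vector_Spaces.linear scale scale \<psi> by (rule lpsi)
  define r where "r = fp_index \<phi>"
  have rU: "\<forall>v\<in>U_part \<phi>. (\<phi> ^^ r) v = 0" unfolding r_def fp_index_def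
    by (rule LeastI[of _ M]) (simp add: Ueq Up_def)
  then have rU': "u \<in> Up \<Longrightarrow> (\<phi> ^^ r) u = 0" for u by (simp add: Ueq)
  have F6: "(\<phi> ^^ r) x \<in> Wp" for x
  proof -
    obtain u y where uy: "x = u + y" "u \<in> Up" "y \<in> Wp" using decomp by blast
    then show ?thesis using rU' powW_in padd by simp
  qed
  have F7: "w \<in> Wp \<Longrightarrow> \<exists>x. w = (\<phi> ^^ r) x" for w using powW[of r] by blast
  show ?thesis unfolding G_Drazin_inverse_def Weq Ueq r_def[symmetric]
  proof
    assume H: "\<phi> \<circ> \<psi> \<circ> \<phi> = \<phi> \<and> \<psi> \<circ> \<phi> ^^ r = \<phi> ^^ r \<circ> \<psi>"
    have A: "\<phi> (\<psi> (\<phi> x)) = \<phi> x" for x using fun_cong[OF conjunct1[OF H], of x] by simp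
    have B: "\<psi> ((\<phi> ^^ r) x) = (\<phi> ^^ r) (\<psi> x)" for x using fun_cong[OF conjunct2[OF H], of x] by simp
    have psiW: "\<psi> ` Wp \<subseteq> Wp"
    proof
      fix z assume "z \<in> \<psi> ` Wp"
      then obtain w where w: "w \<in> Wp" "z = \<psi> w" by blast
      then obtain x where "w = (\<phi> ^^ r) x" using F7 by blast
      then show "z \<in> Wp" using w B F6 by simp
    qed
    have psiU: "\<psi> ` Up \<subseteq> Up"
    proof
      fix z assume "z \<in> \<psi> ` Up"
      then obtain u where u: "u \<in> Up" "z = \<psi> u" by blast
      have "(\<phi> ^^ r) z = 0" using u B rU' Psi.zero by metis
      then have "z \<in> U_part \<phi>" by (auto simp: U_part_def)
      then show "z \<in> Up" by (simp add: Ueq)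
    qed
    have C: "\<forall>w\<in>Wp. \<psi> (\<phi> w) = w \<and> \<phi> (\<psi> w) = w"
    proof
      fix w assume w: "w \<in> Wp"
      have "\<psi> (\<phi> w) \<in> Wp" using psiW phiW_in[OF w] by blast
      then have 1: "\<psi> (\<phi> w) = w" using inj_onD[OF injW A[of w] _ w] by blast
      obtain w' where "w' \<in> Wp" "w = \<phi> w'" using w phiW by blast
      then have "\<phi> (\<psi> w) = w" using A by simp
      with 1 show "\<psi> (\<phi> w) = w \<and> \<phi> (\<psi> w) = w" by simp
    qed
    show "\<psi> ` Wp \<subseteq> Wp \<and> \<psi> ` Up \<subseteq> Up \<and> (\<forall>w\<in>Wp. \<psi> (\<phi> w) = w \<and> \<phi> (\<psi> w) = w) \<and>
      (\<forall>u\<in>Up. \<phi> (\<psi> (\<phi> u)) = \<phi> u)" using psiW psiU C A by blast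
  next
    assume H: "\<psi> ` Wp \<subseteq> Wp \<and> \<psi> ` Up \<subseteq> Up \<and> (\<forall>w\<in>Wp. \<psi> (\<phi> w) = w \<and> \<phi> (\<psi> w) = w) \<and>
      (\<forall>u\<in>Up. \<phi> (\<psi> (\<phi> u)) = \<phi> u)"
    then have psiU: "u \<in> Up \<Longrightarrow> \<psi> u \<in> Up" for u by blast
    have W1: "w \<in> Wp \<Longrightarrow> \<psi> (\<phi> w) = w" for w using H by blast
    have W2: "w \<in> Wp \<Longrightarrow> \<phi> (\<psi> w) = w" for w using H by blast
    have U1: "u \<in> Up \<Longrightarrow> \<phi> (\<psi> (\<phi> u)) = \<phi> u" for u using H by blast
    have 1: "\<phi> \<circ> \<psi> \<circ> \<phi> = \<phi>"
    proof
      fix x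
      obtain u y where uy: "x = u + y" "u \<in> Up" "y \<in> Wp" using decomp by blast
      have "\<phi> (\<psi> (\<phi> x)) = \<phi> (\<psi> (\<phi> u)) + \<phi> (\<psi> (\<phi> y))" using uy(1) by (simp add: phadd Psi.add)
      also have "\<dots> = \<phi> u + \<phi> y" using U1[OF uy(2)] W1[OF uy(3)] by simp
      also have "\<dots> = \<phi> x" using uy(1) by (simp add: phadd)
      finally show "(\<phi> \<circ> \<psi> \<circ> \<phi>) x = \<phi> x" by simp
    qed
    have K1: "w \<in> Wp \<Longrightarrow> \<psi> ((\<phi> ^^ Suc j) w) = (\<phi> ^^ j) w" for j w
    proof (induction j arbitrary: w)
      case 0 then show ?case using W1 by simp
    next
      case (Suc j)
      have "(\<phi> ^^ Suc (Suc j)) w = (\<phi> ^^ Suc j) (\<phi> w)" by (simp only: funpow_Suc_right o_apply)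
      then show ?case using Suc.IH[OF phiW_in[OF Suc.prems]] by (simp only: funpow_Suc_right o_apply)
    qed
    have K2: "w \<in> Wp \<Longrightarrow> (\<phi> ^^ Suc j) (\<psi> w) = (\<phi> ^^ j) w" for j w
      using W2 by (simp only: funpow_Suc_right o_apply)
    have K: "w \<in> Wp \<Longrightarrow> \<psi> ((\<phi> ^^ r) w) = (\<phi> ^^ r) (\<psi> w)" for w
      using K1 K2 by (cases r) auto
    have 2: "\<psi> \<circ> \<phi> ^^ r = \<phi> ^^ r \<circ> \<psi>"
    proof
      fix x
      obtain u y where uy: "x = u + y" "u \<in> Up" "y \<in> Wp" using decomp by blast
      have "\<psi> ((\<phi> ^^ r) x) = \<psi> ((\<phi> ^^ r) y)" using uy rU' by (simp add: padd)
      also have "\<dots> = (\<phi> ^^ r) (\<psi> y)" using K uy(3) by simp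
      also have "\<dots> = (\<phi> ^^ r) (\<psi> x)" using uy rU'[OF psiU[OF uy(2)]] by (simp add: padd Psi.add)
      finally show "(\<psi> \<circ> \<phi> ^^ r) x = (\<phi> ^^ r \<circ> \<psi>) x" by simp
    qed
    show "\<phi> \<circ> \<psi> \<circ> \<phi> = \<phi> \<and> \<psi> \<circ> \<phi> ^^ r = \<phi> ^^ r \<circ> \<psi>" using 1 2 by blast
  qed
qed

end

theorem proposition3p4:
  fixes scale :: "'k::field \<Rightarrow> 'v::ab_group_add \<Rightarrow> 'v"
    and \<phi> \<psi> :: "'v \<Rightarrow> 'v"
  assumes "vector_space scale"
    and "finite_potent scale \<phi>"
    and "Vector_Spaces.linear scale scale \<psi>"
  shows "G_Drazin_inverse \<phi> \<psi> \<longleftrightarrow>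
    (\<psi> ` W_part scale \<phi> \<subseteq> W_part scale \<phi> \<and> \<psi> ` U_part \<phi> \<subseteq> U_part \<phi> \<and>
     (\<forall>w\<in>W_part scale \<phi>. \<psi> (\<phi> w) = w \<and> \<phi> (\<psi> w) = w) \<and>
     (\<forall>u\<in>U_part \<phi>. \<phi> (\<psi> (\<phi> u)) = \<phi> u))"
proof -
  obtain n B where l: "Vector_Spaces.linear scale scale \<phi>" and B: "finite B" "module.span scale B = range (\<phi> ^^ n)"
    using assms(2) unfolding finite_potent_def by blast
  interpret F: fpot scale \<phi> B n
    by (intro fpot.intro fpot_axioms.intro assms(1) l B)
  show ?thesis by (rule F.main[OF assms(3)])
qed

end
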